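(* Let $G=(V,E)$ be a finite undirected graph without multi-edges and self-loops, with $N=|V|\ge 1$. Suppose that $G$ is removed completely by the leaf-removal algorithm, and let $C\subseteq V$ be the set of vertices covered by the algorithm. Then the linear-programming relaxation $$\min\ \frac{1}{N}\sum_{i\in V}x_i \quad\text{subject to}\quad x_i+x_j\ge 1\ \ \forall (i,j)\in E,\qquad x_i\in[0,1]\ \ \forall i\in V$$ has an optimal solution, and its optimal value equals $|C|/N$, the value obtained by the leaf-removal algorithm.
   Context: The minimum vertex cover problem on $G$ is the integer program: minimize $\frac1N\sum_{i\in V}x_i$ subject to $x_i+x_j\ge 1$ for all $(i,j)\in E$ and $x_i\in\{0,1\}$ for all $i\in V$. Its linear-programming (LP) relaxation replaces $x_i\in\{0,1\}$ by $x_i\in[0,1]$. A leaf is a vertex of degree one. The leaf-removal algorithm works as follows: as long as the current graph contains a leaf $w$, let $v$ be the unique neighbor of $w$; cover $v$ (add it to $C$) and delete $v$ together with all its incident edges from the current graph. The algorithm stops when the remaining graph has no leaf; if edges then remain, all vertices of the remaining non-trivial connected components (the leaf-removal core) are also covered. The graph $G$ is said to be removed completely by leaf removal if, when the algorithm stops, the remaining graph has no edges (the leaf-removal core is empty), so that $C$ consists exactly of the vertices covered during the leaf-removal steps. *)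

theory Defs
  imports Complex_Main
begin

definition simple_graph :: "'a set \<Rightarrow> 'a set set \<Rightarrow> bool" where
  "simple_graph V E \<longleftrightarrow> finite V \<and>
     (\<forall>e\<in>E. \<exists>i j. e = {i, j} \<and> i \<noteq> j \<and> i \<in> V \<and> j \<in> V)"

definition is_leaf :: "'a set set \<Rightarrow> 'a \<Rightarrow> bool" where
  "is_leaf F w \<longleftrightarrow> card {e\<in>F. w \<in> e} = 1"

text \<open>Runs of the leaf-removal algorithm: lr_run F C F' C' means that starting
  from current edge set F and covered set C, a sequence of leaf-removal steps
  reaches edge set F' and covered set C'.\<close>
inductive lr_run :: "'a set set \<Rightarrow> 'a set \<Rightarrow> 'a set set \<Rightarrow> 'a set \<Rightarrow> bool" where
  lr_refl: "lr_run F C F C"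
| lr_step: "is_leaf F w \<Longrightarrow> {w, v} \<in> F \<Longrightarrow>
            lr_run (F - {e. v \<in> e}) (insert v C) F' C' \<Longrightarrow> lr_run F C F' C'"

definition removed_completely_with :: "'a set set \<Rightarrow> 'a set \<Rightarrow> bool" where
  "removed_completely_with E C \<longleftrightarrow>
     (\<exists>F. lr_run E {} F C \<and> (\<forall>w. \<not> is_leaf F w) \<and> F = {})"

definition lp_feasible :: "'a set \<Rightarrow> 'a set set \<Rightarrow> ('a \<Rightarrow> real) \<Rightarrow> bool" where
  "lp_feasible V E x \<longleftrightarrow> (\<forall>i\<in>V. 0 \<le> x i \<and> x i \<le> 1) \<and>
     (\<forall>i j. {i, j} \<in> E \<longrightarrow> x i + x j \<ge> 1)"

definition lp_objective :: "'a set \<Rightarrow> ('a \<Rightarrow> real) \<Rightarrow> real" where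
  "lp_objective V x = (1 / real (card V)) * (\<Sum>i\<in>V. x i)"

end

theory Submission
  imports Defs
begin

lemma lr_inv:
  assumes "lr_run F C F' C'"
  shows "C \<inter> \<Union>F = {} \<Longrightarrow> \<exists>f. F' \<subseteq> F \<and> C \<subseteq> C' \<and> C' - C \<subseteq> \<Union>F \<and> finite (C' - C) \<and>
     (\<forall>e\<in>F - F'. e \<inter> (C' - C) \<noteq> {}) \<and> (\<forall>v\<in>C' - C. f v \<in> F \<and> v \<in> f v) \<and>
     (\<forall>u\<in>C' - C. \<forall>v\<in>C' - C. u \<noteq> v \<longrightarrow> f u \<inter> f v = {})"
  using assms
proof (induction rule: lr_run.induct)
  case (lr_refl F C)
  then show ?case by auto
next
  case (lr_step F w v C F' C')
  define F1 where "F1 = F - {e. v \<in> e}"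
  have vC: "v \<notin> C" using lr_step.prems lr_step.hyps(2) by blast
  have "insert v C \<inter> \<Union>F1 = {}"
  proof (intro equalityI subsetI)
    fix a assume "a \<in> insert v C \<inter> \<Union>F1"
    then obtain e where "a \<in> insert v C" "a \<in> e" "e \<in> F" "v \<notin> e" unfolding F1_def by auto
    then show "a \<in> {}" using lr_step.prems by auto
  qed simp
  then have "insert v C \<inter> \<Union>(F - {e. v \<in> e}) = {}" unfolding F1_def .
  from lr_step.IH[OF this, folded F1_def] obtain f1 where IH: "F' \<subseteq> F1" "insert v C \<subseteq> C'" "C' - insert v C \<subseteq> \<Union>F1"
     "finite (C' - insert v C)" "\<forall>e\<in>F1 - F'. e \<inter> (C' - insert v C) \<noteq> {}"
     "\<forall>u\<in>C' - insert v C. f1 u \<in> F1 \<and> u \<in> f1 u"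
     "\<forall>u\<in>C' - insert v C. \<forall>z\<in>C' - insert v C. u \<noteq> z \<longrightarrow> f1 u \<inter> f1 z = {}"
    by (elim exE conjE) (rule that; assumption)
  have leaf: "{e\<in>F. w \<in> e} = {{w, v}}"
  proof -
    have "card {e\<in>F. w \<in> e} = 1" using lr_step.hyps(1) by (simp add: is_leaf_def)
    then obtain a where "{e\<in>F. w \<in> e} = {a}" by (auto simp: card_Suc_eq)
    moreover have "{w,v} \<in> {e\<in>F. w \<in> e}" using lr_step.hyps(2) by simp
    ultimately show ?thesis by auto
  qed
  have F1F: "F1 \<subseteq> F" and F1v: "\<And>e. e \<in> F1 \<Longrightarrow> v \<notin> e" unfolding F1_def by auto
  have F1I: "\<And>e. e \<in> F \<Longrightarrow> v \<notin> e \<Longrightarrow> e \<in> F1" unfolding F1_def by auto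
  have D: "C' - C = insert v (C' - insert v C)" using IH(2) vC by blast
  have vD1: "v \<notin> C' - insert v C" by blast
  define f where "f = f1(v := {w, v})"
  have nw: "\<forall>u\<in>C' - insert v C. w \<notin> f1 u \<and> v \<notin> f1 u"
  proof
    fix u assume u: "u \<in> C' - insert v C"
    then have "f1 u \<in> F1" using IH(6) by blast
    then have a: "f1 u \<in> F" "v \<notin> f1 u" using F1F F1v by auto
    show "w \<notin> f1 u \<and> v \<notin> f1 u"
    proof
      show "w \<notin> f1 u"
      proof
        assume "w \<in> f1 u"
        then have "f1 u \<in> {e\<in>F. w \<in> e}" using a by simp
        then have "f1 u = {w,v}" using leaf by simp
        then show False using a by simp
      qed
    qed (rule a(2))
  qed
  show ?case
  proof (rule exI[of _ f], intro conjI)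
    show "F' \<subseteq> F" using IH(1) F1F by (rule order.trans)
    show "C \<subseteq> C'" using IH(2) by blast
    have "\<Union>F1 \<subseteq> \<Union>F" using F1F by (rule Union_mono)
    moreover have "v \<in> \<Union>F" using lr_step.hyps(2) by blast
    ultimately show "C' - C \<subseteq> \<Union>F" using D IH(3) by blast
    show "finite (C' - C)" using D IH(4) by (metis finite_insert)
    show "\<forall>e\<in>F - F'. e \<inter> (C' - C) \<noteq> {}"
    proof
      fix e assume e: "e \<in> F - F'"
      show "e \<inter> (C' - C) \<noteq> {}"
      proof (cases "v \<in> e")
        case True then show ?thesis using D by blast
      next
        case False
        then have "e \<in> F1 - F'" using e F1I by blast
        then show ?thesis using IH(5) D by blast
      qed
    qed
    show "\<forall>u\<in>C' - C. f u \<in> F \<and> u \<in> f u"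
    proof
      fix u assume u: "u \<in> C' - C"
      show "f u \<in> F \<and> u \<in> f u"
      proof (cases "u = v")
        case True then show ?thesis using lr_step.hyps(2) by (simp add: f_def)
      next
        case False
        then have "u \<in> C' - insert v C" using u by blast
        then have "f1 u \<in> F1 \<and> u \<in> f1 u" using IH(6) by blast
        then show ?thesis using F1F False by (auto simp: f_def)
      qed
    qed
    show "\<forall>u\<in>C' - C. \<forall>z\<in>C' - C. u \<noteq> z \<longrightarrow> f u \<inter> f z = {}"
    proof (intro ballI impI)
      fix u z assume u: "u \<in> C' - C" and z: "z \<in> C' - C" and uz: "u \<noteq> z"
      show "f u \<inter> f z = {}"
      proof (cases "u = v")
        case True
        then have "z \<in> C' - insert v C" using z uz D by blast
        then show ?thesis using nw True unfolding f_def by auto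
      next
        case False
        note uF = False
        show ?thesis
        proof (cases "z = v")
          case True
          have "u \<in> C' - insert v C" using u uF D by blast
          then show ?thesis using nw True unfolding f_def by auto
        next
          case False
          have "u \<in> C' - insert v C" "z \<in> C' - insert v C" using u z uF False D by blast+
          then show ?thesis using IH(7) uz uF False unfolding f_def by auto
        qed
      qed
    qed
  qed
qed

theorem theorem1:
  fixes V :: "'a set" and E :: "'a set set" and C :: "'a set"
  assumes "simple_graph V E"
    and "card V \<ge> 1"
    and "removed_completely_with E C"
  shows "\<exists>x. lp_feasible V E x \<and>
           (\<forall>y. lp_feasible V E y \<longrightarrow> lp_objective V x \<le> lp_objective V y) \<and>
           lp_objective V x = real (card C) / real (card V)"
proof -
  obtain F where "lr_run E {} F C" and "F = {}" using assms(3) unfolding removed_completely_with_def by (elim exE conjE)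
  then have run: "lr_run E {} {} C" by simp
  obtain f where H: "C \<subseteq> \<Union>E" "finite C" "\<forall>e\<in>E. e \<inter> C \<noteq> {}"
     "\<forall>v\<in>C. f v \<in> E \<and> v \<in> f v" "\<forall>u\<in>C. \<forall>v\<in>C. u \<noteq> v \<longrightarrow> f u \<inter> f v = {}"
  proof -
    have "\<exists>f. {} \<subseteq> E \<and> {} \<subseteq> C \<and> C \<subseteq> \<Union>E \<and> finite C \<and> (\<forall>e\<in>E. e \<inter> C \<noteq> {}) \<and>
      (\<forall>v\<in>C. f v \<in> E \<and> v \<in> f v) \<and> (\<forall>u\<in>C. \<forall>v\<in>C. u \<noteq> v \<longrightarrow> f u \<inter> f v = {})"
      using lr_inv[OF run Int_empty_left] by (simp only: Diff_empty)
    then show ?thesis by (elim exE conjE) (rule that; assumption)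
  qed
  have finV: "finite V" and EV: "\<forall>e\<in>E. \<exists>i j. e = {i, j} \<and> i \<noteq> j \<and> i \<in> V \<and> j \<in> V"
    using assms(1) unfolding simple_graph_def by simp_all
  have CV: "C \<subseteq> V"
  proof
    fix c assume "c \<in> C"
    then obtain e where e: "e \<in> E" "c \<in> e" using H(1) by blast
    then obtain i j where "e = {i, j}" "i \<in> V" "j \<in> V" using EV by blast
    then show "c \<in> V" using e by blast
  qed
  have Vpos: "real (card V) > 0" using assms(2) by simp
  define x where "x = (\<lambda>i. if i \<in> C then 1 else 0 :: real)"
  have sx: "(\<Sum>i\<in>V. x i) = real (card C)"
  proof -
    have "(\<Sum>i\<in>V. x i) = (\<Sum>i\<in>V. if i \<in> C then 1 else 0)" unfolding x_def by simp
    also have "\<dots> = real (card (V \<inter> C))" using finV by (simp add: sum.If_cases)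
    also have "V \<inter> C = C" using CV by blast
    finally show ?thesis .
  qed
  have feas: "lp_feasible V E x"
    unfolding lp_feasible_def
  proof (intro conjI allI impI ballI)
    fix i j assume "{i, j} \<in> E"
    then have "{i,j} \<inter> C \<noteq> {}" using H(3) by blast
    then show "x i + x j \<ge> 1" unfolding x_def by auto
  qed (auto simp: x_def)
  have opt: "real (card C) \<le> (\<Sum>i\<in>V. y i)" if y: "lp_feasible V E y" for y
  proof -
    have y0: "\<forall>i\<in>V. 0 \<le> y i" and ye: "\<forall>i j. {i, j} \<in> E \<longrightarrow> y i + y j \<ge> 1"
      using y unfolding lp_feasible_def by blast+
    have pair: "\<exists>i j. f v = {i, j} \<and> i \<noteq> j \<and> i \<in> V \<and> j \<in> V \<and> {i,j} \<in> E" if v: "v \<in> C" for v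
    proof -
      have fE: "f v \<in> E" using H(4) v by blast
      from bspec[OF EV fE] obtain i j where "f v = {i, j}" "i \<noteq> j" "i \<in> V" "j \<in> V" by (elim exE conjE)
      then show ?thesis using fE by (intro exI[of _ i] exI[of _ j]) simp
    qed
    have fin: "\<forall>v\<in>C. finite (f v)"
    proof
      fix v assume "v \<in> C"
      then obtain i j where "f v = {i, j}" using pair by blast
      then show "finite (f v)" by simp
    qed
    have one: "1 \<le> (\<Sum>i\<in>f v. y i)" if v: "v \<in> C" for v
    proof -
      obtain i j where "f v = {i, j}" "i \<noteq> j" "{i,j} \<in> E" using pair[OF v] by blast
      then show ?thesis using ye by simp
    qed
    have sub: "(\<Union>v\<in>C. f v) \<subseteq> V"
    proof
      fix a assume "a \<in> (\<Union>v\<in>C. f v)"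
      then obtain v where "v \<in> C" "a \<in> f v" by blast
      moreover obtain i j where "f v = {i, j}" "i \<in> V" "j \<in> V" using pair[OF \<open>v \<in> C\<close>] by blast
      ultimately show "a \<in> V" by auto
    qed
    have "real (card C) = (\<Sum>v\<in>C. 1)" by simp
    also have "\<dots> \<le> (\<Sum>v\<in>C. \<Sum>i\<in>f v. y i)" using one by (intro sum_mono) auto
    also have "\<dots> = (\<Sum>i\<in>(\<Union>v\<in>C. f v). y i)"
      using sum.UNION_disjoint[OF H(2), of f y] fin H(5) by simp
    also have "\<dots> \<le> (\<Sum>i\<in>V. y i)"
      using sub y0 finV by (intro sum_mono2) auto
    finally show ?thesis .
  qed
  show ?thesis
  proof (intro exI[of _ x] conjI allI impI)
    show "lp_feasible V E x" by (rule feas)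
    fix y assume "lp_feasible V E y"
    then have "real (card C) \<le> (\<Sum>i\<in>V. y i)" by (rule opt)
    then show "lp_objective V x \<le> lp_objective V y"
      unfolding lp_objective_def sx using Vpos by (simp add: divide_right_mono)
  next
    show "lp_objective V x = real (card C) / real (card V)"
      unfolding lp_objective_def sx by simp
  qed
qed

end
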